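(* Let $\Pi$ be a non-negative projector on $\mathcal{Q}^n$ and suppose $\Pi|\psi\rangle=|\psi\rangle$ for some non-negative state $|\psi\rangle$. Then for any $x\in\mathcal{S}(\psi)$: (1) $\langle x|\Pi|x\rangle>0$; (2) if $\langle x|\Pi|y\rangle>0$ for some $y\in\{0,1\}^n$, then $y\in\mathcal{S}(\psi)$ and $$\frac{\langle y|\psi\rangle}{\langle x|\psi\rangle}=\sqrt{\frac{\langle y|\Pi|y\rangle}{\langle x|\Pi|x\rangle}}.$$
   Context: $\mathcal{Q}^n=(\mathbb{C}^2)^{\otimes n}$ with standard basis $\{|x\rangle\}$, $x\in\{0,1\}^n$. A non-negative projector is a Hermitian projector whose standard-basis matrix has real non-negative entries. A non-negative state is a normalized vector with real non-negative amplitudes in the standard basis. For such a state, its support is $\mathcal{S}(\psi)=\{x\in\{0,1\}^n:\langle x|\psi\rangle>0\}$. *)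

theory Defs
  imports "HOL-Analysis.Analysis"
begin

text \<open>Standard basis of Q^n: bit strings of length n, as bool lists.\<close>
definition bitstrings :: "nat \<Rightarrow> bool list set" where
  "bitstrings n = {x. length x = n}"

text \<open>Operators are given by their standard-basis matrix entries M x y = <x|M|y>.
  A non-negative projector: entries real and non-negative, Hermitian (for real
  entries: symmetric), and idempotent.\<close>
definition nonneg_projector :: "nat \<Rightarrow> (bool list \<Rightarrow> bool list \<Rightarrow> real) \<Rightarrow> bool" where
  "nonneg_projector n P \<longleftrightarrow>
     (\<forall>x\<in>bitstrings n. \<forall>y\<in>bitstrings n. P x y \<ge> 0) \<and>
     (\<forall>x\<in>bitstrings n. \<forall>y\<in>bitstrings n. P x y = P y x) \<and>
     (\<forall>x\<in>bitstrings n. \<forall>y\<in>bitstrings n. (\<Sum>z\<in>bitstrings n. P x z * P z y) = P x y)"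

definition nonneg_state :: "nat \<Rightarrow> (bool list \<Rightarrow> real) \<Rightarrow> bool" where
  "nonneg_state n \<psi> \<longleftrightarrow>
     (\<forall>x\<in>bitstrings n. \<psi> x \<ge> 0) \<and> (\<Sum>x\<in>bitstrings n. (\<psi> x)\<^sup>2) = 1"

definition apply_op :: "nat \<Rightarrow> (bool list \<Rightarrow> bool list \<Rightarrow> real) \<Rightarrow> (bool list \<Rightarrow> real) \<Rightarrow> bool list \<Rightarrow> real" where
  "apply_op n P \<psi> x = (\<Sum>y\<in>bitstrings n. P x y * \<psi> y)"

definition support :: "nat \<Rightarrow> (bool list \<Rightarrow> real) \<Rightarrow> bool list set" where
  "support n \<psi> = {x\<in>bitstrings n. \<psi> x > 0}"

end

theory Submission
  imports Defs
begin

lemma fin_bits: "finite (bitstrings n)"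
  unfolding bitstrings_def using finite_lists_length_eq[of "UNIV::bool set" n] by simp

theorem lemma4p4:
  fixes n :: nat and P :: "bool list \<Rightarrow> bool list \<Rightarrow> real" and \<psi> :: "bool list \<Rightarrow> real"
  assumes "nonneg_projector n P"
    and "nonneg_state n \<psi>"
    and "\<forall>x\<in>bitstrings n. apply_op n P \<psi> x = \<psi> x"
    and "x \<in> support n \<psi>"
  shows "P x x > 0 \<and>
         (\<forall>y\<in>bitstrings n. P x y > 0 \<longrightarrow>
           y \<in> support n \<psi> \<and> \<psi> y / \<psi> x = sqrt (P y y / P x x))"
proof -
  define B where "B = bitstrings n"
  define S where "S = support n \<psi>"
  have finB: "finite B" using fin_bits B_def by simp
  have SB: "S \<subseteq> B" unfolding S_def B_def support_def by auto
  have finS: "finite S" using finB SB finite_subset by blast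
  have Pnn: "\<And>a b. a \<in> B \<Longrightarrow> b \<in> B \<Longrightarrow> P a b \<ge> 0"
    using assms(1) unfolding nonneg_projector_def B_def by blast
  have Psym: "\<And>a b. a \<in> B \<Longrightarrow> b \<in> B \<Longrightarrow> P a b = P b a"
    using assms(1) unfolding nonneg_projector_def B_def by blast
  have Pid: "\<And>a b. a \<in> B \<Longrightarrow> b \<in> B \<Longrightarrow> (\<Sum>z\<in>B. P a z * P z b) = P a b"
    using assms(1) unfolding nonneg_projector_def B_def by blast
  have psinn: "\<And>a. a \<in> B \<Longrightarrow> \<psi> a \<ge> 0"
    using assms(2) unfolding nonneg_state_def B_def by blast
  have fixP: "\<And>a. a \<in> B \<Longrightarrow> (\<Sum>z\<in>B. P a z * \<psi> z) = \<psi> a"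
    using assms(3) unfolding apply_op_def B_def by blast
  have Sdef: "\<And>a. a \<in> S \<longleftrightarrow> a \<in> B \<and> \<psi> a > 0"
    unfolding S_def B_def support_def by auto
  have xS: "x \<in> S" using assms(4) S_def by simp
  have xB: "x \<in> B" using xS Sdef by auto
  have out0: "\<And>a. a \<in> B - S \<Longrightarrow> \<psi> a = 0"
    using Sdef psinn by force
  have nbr: "\<And>a b. a \<in> S \<Longrightarrow> b \<in> B \<Longrightarrow> P b a > 0 \<Longrightarrow> b \<in> S"
  proof -
    fix a b assume a: "a \<in> S" and b: "b \<in> B" and p: "P b a > 0"
    have aB: "a \<in> B" using a Sdef by auto
    have "P b a * \<psi> a \<le> (\<Sum>z\<in>B. P b z * \<psi> z)"
      by (rule member_le_sum) (use aB finB Pnn psinn b in auto)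
    also have "\<dots> = \<psi> b" using fixP b by simp
    finally have "\<psi> b > 0" using p a Sdef
      by (smt (verit) mult_pos_pos)
    thus "b \<in> S" using b Sdef by auto
  qed
  have fixS: "\<And>a. a \<in> B \<Longrightarrow> (\<Sum>z\<in>S. P a z * \<psi> z) = \<psi> a"
  proof -
    fix a assume a: "a \<in> B"
    have "(\<Sum>z\<in>S. P a z * \<psi> z) = (\<Sum>z\<in>B. P a z * \<psi> z)"
      by (rule sum.mono_neutral_left) (use finB SB out0 in auto)
    thus "(\<Sum>z\<in>S. P a z * \<psi> z) = \<psi> a" using fixP a by simp
  qed
  have key: "P y c * \<psi> z = P z c * \<psi> y"
    if c: "c \<in> S" and y: "y \<in> S" and z: "z \<in> S" and pyz: "P y z > 0" for c y z
  proof -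
    define u where "u a = P a c" for a
    have cB: "c \<in> B" using c Sdef by auto
    have u0: "\<And>a. a \<in> B - S \<Longrightarrow> u a = 0"
    proof -
      fix a assume a: "a \<in> B - S"
      have "u a \<ge> 0" using a cB Pnn u_def by auto
      moreover have "\<not> u a > 0" using nbr[OF c, of a] a u_def by auto
      ultimately show "u a = 0" by simp
    qed
    have uu: "(\<Sum>a\<in>S. (u a)^2) = P c c"
    proof -
      have "(\<Sum>a\<in>S. (u a)^2) = (\<Sum>a\<in>B. (u a)^2)"
        by (rule sum.mono_neutral_left) (use finB SB u0 in auto)
      also have "\<dots> = (\<Sum>a\<in>B. P c a * P a c)"
        by (rule sum.cong) (use Psym cB u_def in \<open>auto simp: power2_eq_square\<close>)
      also have "\<dots> = P c c" using Pid cB by simp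
      finally show ?thesis .
    qed
    have Pu: "\<And>a. a \<in> B \<Longrightarrow> (\<Sum>b\<in>S. P a b * u b) = u a"
    proof -
      fix a assume a: "a \<in> B"
      have "(\<Sum>b\<in>S. P a b * u b) = (\<Sum>b\<in>B. P a b * u b)"
        by (rule sum.mono_neutral_left) (use finB SB u0 in auto)
      also have "\<dots> = u a" using Pid a cB u_def by simp
      finally show "(\<Sum>b\<in>S. P a b * u b) = u a" .
    qed
    define T where "T a b = P a b * (u a * \<psi> b - u b * \<psi> a)^2 / (\<psi> a * \<psi> b)" for a b
    define T1 where "T1 a b = P a b * \<psi> b * ((u a)^2 / \<psi> a)" for a b
    define T2 where "T2 a b = P b a * \<psi> a * ((u b)^2 / \<psi> b)" for a b
    define T3 where "T3 a b = u a * (P a b * u b)" for a b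
    have Teq: "T a b = T1 a b + T2 a b - 2 * T3 a b" if "a \<in> S" "b \<in> S" for a b
    proof -
      have "\<psi> a > 0" "\<psi> b > 0" using that Sdef by auto
      moreover have "P a b = P b a" using that Sdef Psym by auto
      ultimately show ?thesis unfolding T_def T1_def T2_def T3_def
        by (simp add: field_simps power2_eq_square)
    qed
    have s1: "(\<Sum>a\<in>S. \<Sum>b\<in>S. T1 a b) = P c c"
    proof -
      have "(\<Sum>a\<in>S. \<Sum>b\<in>S. T1 a b) = (\<Sum>a\<in>S. (\<Sum>b\<in>S. P a b * \<psi> b) * ((u a)^2 / \<psi> a))"
        unfolding T1_def by (simp only: sum_distrib_right)
      also have "\<dots> = (\<Sum>a\<in>S. (u a)^2)"
        by (rule sum.cong) (use fixS Sdef in auto)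
      finally show ?thesis using uu by simp
    qed
    have s2: "(\<Sum>a\<in>S. \<Sum>b\<in>S. T2 a b) = P c c"
    proof -
      have "(\<Sum>a\<in>S. \<Sum>b\<in>S. T2 a b) = (\<Sum>b\<in>S. \<Sum>a\<in>S. T2 a b)" by (rule sum.swap)
      also have "\<dots> = (\<Sum>b\<in>S. \<Sum>a\<in>S. T1 b a)" unfolding T1_def T2_def by simp
      finally show ?thesis using s1 by simp
    qed
    have s3: "(\<Sum>a\<in>S. \<Sum>b\<in>S. T3 a b) = P c c"
    proof -
      have "(\<Sum>a\<in>S. \<Sum>b\<in>S. T3 a b) = (\<Sum>a\<in>S. u a * (\<Sum>b\<in>S. P a b * u b))"
        unfolding T3_def by (simp add: sum_distrib_left)
      also have "\<dots> = (\<Sum>a\<in>S. (u a)^2)"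
        by (rule sum.cong) (use Pu Sdef in \<open>auto simp: power2_eq_square\<close>)
      finally show ?thesis using uu by simp
    qed
    have "(\<Sum>a\<in>S. \<Sum>b\<in>S. T a b) = (\<Sum>a\<in>S. \<Sum>b\<in>S. T1 a b + T2 a b - 2 * T3 a b)"
      by (rule sum.cong, simp, rule sum.cong) (use Teq in auto)
    also have "\<dots> = 0" using s1 s2 s3
      by (simp add: sum.distrib sum_subtractf sum_distrib_left[symmetric])
    finally have tot: "(\<Sum>a\<in>S. \<Sum>b\<in>S. T a b) = 0" .
    have Tnn: "\<And>a b. a \<in> S \<Longrightarrow> b \<in> S \<Longrightarrow> T a b \<ge> 0"
    proof -
      fix a b assume "a \<in> S" "b \<in> S"
      hence "\<psi> a > 0" "\<psi> b > 0" "P a b \<ge> 0" using Sdef Pnn by auto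
      thus "T a b \<ge> 0" unfolding T_def by simp
    qed
    have inner: "\<And>a. a \<in> S \<Longrightarrow> (\<Sum>b\<in>S. T a b) \<ge> 0"
      using Tnn by (simp add: sum_nonneg)
    have "(\<Sum>b\<in>S. T y b) = 0"
      using sum_nonneg_eq_0_iff[OF finS, of "\<lambda>a. \<Sum>b\<in>S. T a b"] tot inner y by auto
    hence "T y z = 0"
      using sum_nonneg_eq_0_iff[OF finS, of "T y"] Tnn y z by auto
    moreover have "\<psi> y > 0" "\<psi> z > 0" using y z Sdef by auto
    ultimately have "(u y * \<psi> z - u z * \<psi> y)^2 = 0" using pyz unfolding T_def by simp
    thus ?thesis unfolding u_def by simp
  qed
  have px: "P x x > 0"
  proof (rule ccontr)
    assume "\<not> P x x > 0"
    hence "P x x = 0" using Pnn xB by force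
    hence "(\<Sum>z\<in>B. (P x z)^2) = 0" using Pid[OF xB xB] Psym xB
      by (metis (no_types, lifting) power2_eq_square sum.cong)
    hence z: "\<And>z. z \<in> B \<Longrightarrow> P x z = 0"
      using sum_nonneg_eq_0_iff[OF finB, of "\<lambda>z. (P x z)^2"] by auto
    have "\<psi> x = 0" using fixP[OF xB] z by simp
    thus False using xS Sdef by auto
  qed
  moreover have "\<forall>y\<in>bitstrings n. P x y > 0 \<longrightarrow>
           y \<in> support n \<psi> \<and> \<psi> y / \<psi> x = sqrt (P y y / P x x)"
  proof (intro ballI impI)
    fix y assume yB': "y \<in> bitstrings n" and pxy: "P x y > 0"
    have yB: "y \<in> B" using yB' B_def by simp
    have pyx: "P y x > 0" using pxy Psym xB yB by simp
    have yS: "y \<in> S" using nbr[OF xS yB pyx] .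
    have e1: "P y x * \<psi> x = P x x * \<psi> y" using key[OF xS yS xS pyx] .
    have e2: "P x y * \<psi> y = P y y * \<psi> x" using key[OF yS xS yS pxy] .
    have ppos: "\<psi> x > 0" "\<psi> y > 0" using xS yS Sdef by auto
    have "P x x * (\<psi> y)^2 = P y y * (\<psi> x)^2"
    proof -
      have "P x x * (\<psi> y)^2 = P y x * \<psi> x * \<psi> y" using e1 by (simp add: power2_eq_square)
      also have "\<dots> = P y y * (\<psi> x)^2" using e2 Psym xB yB
        by (simp add: power2_eq_square algebra_simps)
      finally show ?thesis .
    qed
    hence "(\<psi> y / \<psi> x)^2 = P y y / P x x" using ppos px
      by (simp add: field_simps power_divide)
    hence "sqrt (P y y / P x x) = \<psi> y / \<psi> x" using ppos
      by (metis abs_of_nonneg div_0 divide_nonneg_pos less_eq_real_def real_sqrt_abs)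
    thus "y \<in> support n \<psi> \<and> \<psi> y / \<psi> x = sqrt (P y y / P x x)"
      using yS S_def by simp
  qed
  ultimately show ?thesis by blast
qed

end
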